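(* Let $G$ be a finite connected unweighted graph with graph distance $d$, and let $\delta$ be its four-points hyperbolicity constant. Then there exist four vertices $u_1,u_2,u_3,u_4$ such that $$d(u_1,u_3)+d(u_2,u_4)=\max\{d(u_1,u_2)+d(u_3,u_4),\ d(u_1,u_4)+d(u_2,u_3)\}+2\delta,$$ and such that for every $i\in\{1,2,3,4\}$ and every neighbor $w$ of $u_i$ we have $d(w,u_{i+2})\le d(u_i,u_{i+2})$, where indices are taken modulo $4$.
   Context: The four-points hyperbolicity constant of $G$ is the smallest $\delta\ge0$ such that for all vertices $a,b,c,e$: $d(a,b)+d(c,e)\le\max\{d(a,c)+d(b,e),\ d(a,e)+d(b,c)\}+2\delta$. *)

theory Defs
  imports Complex_Main
begin

definition graph :: "'a set \<Rightarrow> ('a \<Rightarrow> 'a \<Rightarrow> bool) \<Rightarrow> bool" where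
  "graph V E \<longleftrightarrow> finite V \<and> (\<forall>x y. E x y \<longrightarrow> x \<in> V \<and> y \<in> V)
     \<and> (\<forall>x y. E x y \<longrightarrow> E y x) \<and> (\<forall>x. \<not> E x x)"

text \<open>A walk of length n from x to y: vertex list of length n+1.\<close>
definition walk :: "('a \<Rightarrow> 'a \<Rightarrow> bool) \<Rightarrow> 'a list \<Rightarrow> 'a \<Rightarrow> 'a \<Rightarrow> bool" where
  "walk E p x y \<longleftrightarrow> p \<noteq> [] \<and> hd p = x \<and> last p = y
     \<and> (\<forall>i. Suc i < length p \<longrightarrow> E (p ! i) (p ! Suc i))"

definition connected_graph :: "'a set \<Rightarrow> ('a \<Rightarrow> 'a \<Rightarrow> bool) \<Rightarrow> bool" where
  "connected_graph V E \<longleftrightarrow> V \<noteq> {} \<and> (\<forall>x\<in>V. \<forall>y\<in>V. \<exists>p. walk E p x y)"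

definition gdist :: "('a \<Rightarrow> 'a \<Rightarrow> bool) \<Rightarrow> 'a \<Rightarrow> 'a \<Rightarrow> nat" where
  "gdist E x y = (LEAST n. \<exists>p. walk E p x y \<and> length p = Suc n)"

definition four_point_ok :: "'a set \<Rightarrow> ('a \<Rightarrow> 'a \<Rightarrow> bool) \<Rightarrow> real \<Rightarrow> bool" where
  "four_point_ok V E \<delta> \<longleftrightarrow> \<delta> \<ge> 0 \<and> (\<forall>a\<in>V. \<forall>b\<in>V. \<forall>c\<in>V. \<forall>e\<in>V.
     real (gdist E a b + gdist E c e)
       \<le> max (real (gdist E a c + gdist E b e)) (real (gdist E a e + gdist E b c)) + 2 * \<delta>)"

definition hyp_const :: "'a set \<Rightarrow> ('a \<Rightarrow> 'a \<Rightarrow> bool) \<Rightarrow> real" where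
  "hyp_const V E = (LEAST \<delta>. four_point_ok V E \<delta>)"

end

theory Submission
  imports Defs
begin

lemma walk_rev:
  assumes sym: "\<forall>x y. E x y \<longrightarrow> E y x" and w: "walk E p x y"
  shows "walk E (rev p) y x"
proof -
  have ne: "p \<noteq> []" and h: "hd p = x" and l: "last p = y"
    and e: "\<And>i. Suc i < length p \<Longrightarrow> E (p ! i) (p ! Suc i)" using w unfolding walk_def by auto
  have "E (rev p ! i) (rev p ! Suc i)" if "Suc i < length p" for i
  proof -
    have 1: "rev p ! i = p ! (length p - 1 - i)" using that by (simp add: rev_nth)
    have 2: "rev p ! Suc i = p ! (length p - 2 - i)" using that by (simp add: rev_nth)
    have "E (p ! (length p - 2 - i)) (p ! Suc (length p - 2 - i))" using e that by simp
    moreover have "Suc (length p - 2 - i) = length p - 1 - i" using that by simp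
    ultimately show ?thesis using 1 2 sym by metis
  qed
  then show ?thesis using ne h l unfolding walk_def by (simp add: hd_rev last_rev)
qed



lemma walk_cons: "E w x \<Longrightarrow> walk E p x y \<Longrightarrow> walk E (w#p) w y"
  unfolding walk_def
proof (intro conjI allI impI)
  fix i assume a: "E w x" "p \<noteq> [] \<and> hd p = x \<and> last p = y \<and> (\<forall>i. Suc i < length p \<longrightarrow> E (p ! i) (p ! Suc i))"
    and i: "Suc i < length (w # p)"
  show "E ((w # p) ! i) ((w # p) ! Suc i)"
  proof (cases i)
    case 0 then show ?thesis using a by (metis hd_conv_nth nth_Cons_0 nth_Cons_Suc)
  next
    case (Suc j) then show ?thesis using a i by simp
  qed
qed auto

lemma gdist_walk:
  assumes "connected_graph V E" "x \<in> V" "y \<in> V"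
  shows "\<exists>p. walk E p x y \<and> length p = Suc (gdist E x y)"
proof -
  obtain p where p: "walk E p x y" using assms unfolding connected_graph_def by blast
  then have "p \<noteq> []" unfolding walk_def by auto
  then have "length p = Suc (length p - 1)" by (cases p) auto
  then have "\<exists>n p. walk E p x y \<and> length p = Suc n" using p by blast
  then have "\<exists>p. walk E p x y \<and> length p = Suc (LEAST n. \<exists>p. walk E p x y \<and> length p = Suc n)"
    by (rule LeastI_ex)
  then show ?thesis unfolding gdist_def .
qed
lemma gdist_le: "walk E p x y \<Longrightarrow> gdist E x y \<le> length p - 1"
proof -
  assume w: "walk E p x y"
  then have "p \<noteq> []" unfolding walk_def by auto
  then have "length p = Suc (length p - 1)" by (cases p) auto
  then have "\<exists>q. walk E q x y \<and> length q = Suc (length p - 1)" using w by blast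
  then show ?thesis unfolding gdist_def by (rule Least_le)
qed

lemma gdist_sym:
  assumes "graph V E" "connected_graph V E" "x \<in> V" "y \<in> V"
  shows "gdist E x y = gdist E y x"
proof -
  have sym: "\<forall>x y. E x y \<longrightarrow> E y x" using assms(1) unfolding graph_def by auto
  have L: "gdist E b a \<le> gdist E a b" if ab: "a \<in> V" "b \<in> V" for a b
  proof -
    obtain p where "walk E p a b" "length p = Suc (gdist E a b)" using gdist_walk[OF assms(2) ab] by blast
    then have "walk E (rev p) b a" "length (rev p) = Suc (gdist E a b)" using walk_rev[OF sym] by simp_all
    then show ?thesis using gdist_le[of E "rev p" b a] by simp
  qed
  show ?thesis using L[OF assms(3,4)] L[OF assms(4,3)] by linarith
qed

lemma gdist_nb:
  assumes "graph V E" "connected_graph V E" "x \<in> V" "y \<in> V" "E x w"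
  shows "gdist E w y \<le> gdist E x y + 1" "gdist E y w \<le> gdist E y x + 1" "w \<in> V"
proof -
  have sym: "E w x" using assms(1,5) unfolding graph_def by auto
  show wV: "w \<in> V" using assms(1,5) unfolding graph_def by auto
  obtain p where "walk E p x y" "length p = Suc (gdist E x y)" using gdist_walk[OF assms(2,3,4)] by blast
  then have "walk E (w#p) w y" "length (w#p) = Suc (gdist E x y + 1)" using walk_cons[of E w x, OF sym] by simp_all
  then show 1: "gdist E w y \<le> gdist E x y + 1" using gdist_le[of E "w#p" w y] by simp
  show "gdist E y w \<le> gdist E y x + 1"
    using 1 gdist_sym[OF assms(1,2) assms(4) wV] gdist_sym[OF assms(1,2) assms(4,3)] by simp
qed



lemma maxlem: "(x::real) \<le> x' + 1 \<Longrightarrow> y \<le> y' + 1 \<Longrightarrow> max x y \<le> max x' y' + 1"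
  by (auto simp: max_def)

theorem mainTheorem5:
  fixes V :: "'a set" and E :: "'a \<Rightarrow> 'a \<Rightarrow> bool"
  assumes "graph V E" and "connected_graph V E"
  shows "\<exists>u :: nat \<Rightarrow> 'a. (\<forall>i<4. u i \<in> V)
    \<and> real (gdist E (u 0) (u 2) + gdist E (u 1) (u 3))
        = max (real (gdist E (u 0) (u 1) + gdist E (u 2) (u 3)))
              (real (gdist E (u 0) (u 3) + gdist E (u 1) (u 2))) + 2 * hyp_const V E
    \<and> (\<forall>i<4. \<forall>w. E (u i) w \<longrightarrow> gdist E w (u ((i + 2) mod 4)) \<le> gdist E (u i) (u ((i + 2) mod 4)))"
proof -
  define D where "D = (\<lambda>x y. real (gdist E x y))"
  define F where "F = (\<lambda>(a,b,c,e). D a c + D b e - max (D a b + D c e) (D a e + D b c))"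
  define L where "L = (\<lambda>(a,b,c,e). D a c + D b e)"
  define Q where "Q = V \<times> V \<times> V \<times> V"
  have finV: "finite V" using assms(1) unfolding graph_def by auto
  have finQ: "finite Q" unfolding Q_def using finV by simp
  obtain v0 where v0: "v0 \<in> V" using assms(2) unfolding connected_graph_def by auto
  have v0Q: "(v0,v0,v0,v0) \<in> Q" unfolding Q_def using v0 by simp
  define M where "M = Max (F ` Q)"
  have Fle: "F q \<le> M" if "q \<in> Q" for q unfolding M_def using finQ that by simp
  have "M \<in> F ` Q" unfolding M_def using finQ v0Q by (intro Max_in) auto
  then obtain q1 where q1: "q1 \<in> Q" "F q1 = M" by (metis imageE)
  have S: "D x y = D y x" if "x \<in> V" "y \<in> V" for x y
    unfolding D_def using gdist_sym[OF assms that] by simp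
  have nb1: "D w y \<le> D x y + 1" and nb2: "D y w \<le> D y x + 1" and nbV: "w \<in> V"
    if "x \<in> V" "y \<in> V" "E x w" for x y w
    using gdist_nb[OF assms that] unfolding D_def by auto
  have hyp: "hyp_const V E = M / 2"
    unfolding hyp_const_def
  proof (rule Least_equality)
    show "four_point_ok V E (M / 2)"
      unfolding four_point_ok_def
    proof (intro conjI ballI)
      show "0 \<le> M / 2" using Fle[OF v0Q] unfolding F_def by simp
      fix a b c e assume V: "a \<in> V" "b \<in> V" "c \<in> V" "e \<in> V"
      have "F (a,c,b,e) \<le> M" using V by (intro Fle) (simp add: Q_def)
      then have "D a b + D c e \<le> max (D a c + D b e) (D a e + D b c) + M"
        unfolding F_def using S[of c b] V by simp
      then show "real (gdist E a b + gdist E c e)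
       \<le> max (real (gdist E a c + gdist E b e)) (real (gdist E a e + gdist E b c)) + 2 * (M / 2)"
        unfolding D_def by simp
    qed
  next
    fix y assume ok: "four_point_ok V E y"
    obtain a b c e where q1e: "q1 = (a,b,c,e)" by (cases q1) auto
    have V: "a \<in> V" "b \<in> V" "c \<in> V" "e \<in> V" using q1 q1e by (auto simp: Q_def)
    have "real (gdist E a c + gdist E b e)
       \<le> max (real (gdist E a b + gdist E c e)) (real (gdist E a e + gdist E c b)) + 2 * y"
      using ok V unfolding four_point_ok_def by blast
    then have "D a c + D b e \<le> max (D a b + D c e) (D a e + D b c) + 2 * y"
      unfolding D_def using S[of c b] V unfolding D_def by simp
    then show "M / 2 \<le> y" using q1 q1e unfolding F_def by simp
  qed
  define A where "A = {q \<in> Q. F q = M}"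
  have finA: "finite A" unfolding A_def using finQ by simp
  have q1A: "q1 \<in> A" unfolding A_def using q1 by simp
  have "Max (L ` A) \<in> L ` A" using finA q1A by (intro Max_in) auto
  then obtain q0 where q0: "q0 \<in> A" "L q0 = Max (L ` A)" by (metis imageE)
  have key: False if "q' \<in> Q" "L q' \<ge> L q0 + 1" "F q' \<ge> M" for q'
  proof -
    have "q' \<in> A" unfolding A_def using Fle[OF that(1)] that by simp
    then have "L q' \<le> L q0" using q0 finA by simp
    then show False using that by simp
  qed
  obtain a b c e where q0e: "q0 = (a,b,c,e)" by (cases q0) auto
  have V: "a \<in> V" "b \<in> V" "c \<in> V" "e \<in> V" using q0 q0e by (auto simp: A_def Q_def)
  have F0: "D a c + D b e - max (D a b + D c e) (D a e + D b c) = M"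
    using q0 q0e unfolding A_def F_def by simp
  have L0: "L q0 = D a c + D b e" using q0e unfolding L_def by simp
  define u :: "nat \<Rightarrow> 'a" where "u = (\<lambda>i. if i = 0 then a else if i = 1 then b else if i = 2 then c else e)"
  have C0: "gdist E w c \<le> gdist E a c" if "E a w" for w
  proof (rule ccontr)
    assume "\<not> ?thesis"
    then have g: "D w c \<ge> D a c + 1" unfolding D_def by simp
    have wV: "w \<in> V" using nbV[OF V(1) V(1) that] .
    have m: "max (D w b + D c e) (D w e + D b c) \<le> max (D a b + D c e) (D a e + D b c) + 1"
      using nb1[OF V(1) V(2) that] nb1[OF V(1) V(4) that] by (intro maxlem) simp_all
    show False
      by (rule key[of "(w,b,c,e)"]) (use wV V g m F0 L0 in \<open>auto simp: Q_def L_def F_def\<close>)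
  qed
  have C1: "gdist E w e \<le> gdist E b e" if "E b w" for w
  proof (rule ccontr)
    assume "\<not> ?thesis"
    then have g: "D w e \<ge> D b e + 1" unfolding D_def by simp
    have wV: "w \<in> V" using nbV[OF V(2) V(2) that] .
    have m: "max (D a w + D c e) (D a e + D w c) \<le> max (D a b + D c e) (D a e + D b c) + 1"
      using nb2[OF V(2) V(1) that] nb1[OF V(2) V(3) that] by (intro maxlem) simp_all
    show False
      by (rule key[of "(a,w,c,e)"]) (use wV V g m F0 L0 in \<open>auto simp: Q_def L_def F_def\<close>)
  qed
  have C2: "gdist E w a \<le> gdist E c a" if "E c w" for w
  proof (rule ccontr)
    assume "\<not> ?thesis"
    then have g: "D w a \<ge> D c a + 1" unfolding D_def by simp
    have wV: "w \<in> V" using nbV[OF V(3) V(3) that] .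
    have g': "D a w \<ge> D a c + 1" using g S[OF V(1) wV] S[OF V(1) V(3)] by simp
    have m: "max (D a b + D w e) (D a e + D b w) \<le> max (D a b + D c e) (D a e + D b c) + 1"
      using nb1[OF V(3) V(4) that] nb2[OF V(3) V(2) that] by (intro maxlem) simp_all
    show False
      by (rule key[of "(a,b,w,e)"]) (use wV V g' m F0 L0 in \<open>auto simp: Q_def L_def F_def\<close>)
  qed
  have C3: "gdist E w b \<le> gdist E e b" if "E e w" for w
  proof (rule ccontr)
    assume "\<not> ?thesis"
    then have g: "D w b \<ge> D e b + 1" unfolding D_def by simp
    have wV: "w \<in> V" using nbV[OF V(4) V(4) that] .
    have g': "D b w \<ge> D b e + 1" using g S[OF V(2) wV] S[OF V(2) V(4)] by simp
    have m: "max (D a b + D c w) (D a w + D b c) \<le> max (D a b + D c e) (D a e + D b c) + 1"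
      using nb2[OF V(4) V(3) that] nb2[OF V(4) V(1) that] by (intro maxlem) simp_all
    show False
      by (rule key[of "(a,b,c,w)"]) (use wV V g' m F0 L0 in \<open>auto simp: Q_def L_def F_def\<close>)
  qed
  have P1: "\<forall>i<4. u i \<in> V" using V unfolding u_def by auto
  have P2: "real (gdist E (u 0) (u 2) + gdist E (u 1) (u 3))
        = max (real (gdist E (u 0) (u 1) + gdist E (u 2) (u 3)))
              (real (gdist E (u 0) (u 3) + gdist E (u 1) (u 2))) + 2 * hyp_const V E"
    using F0 unfolding hyp u_def D_def by simp
  have P3: "\<forall>i<4. \<forall>w. E (u i) w \<longrightarrow> gdist E w (u ((i + 2) mod 4)) \<le> gdist E (u i) (u ((i + 2) mod 4))"
  proof (intro allI impI)
    fix i w assume i: "i < 4" and ew: "E (u i) w"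
    have "i = 0 \<or> i = 1 \<or> i = 2 \<or> i = 3" using i by arith
    then show "gdist E w (u ((i + 2) mod 4)) \<le> gdist E (u i) (u ((i + 2) mod 4))"
      using C0 C1 C2 C3 ew unfolding u_def by auto
  qed
  show ?thesis using P1 P2 P3 by blast
qed
end
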